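(* Let $G$ be an $r$-graph, fix a residue $k$ modulo $r$, and let $\mathbf x,\mathbf y\in\vec E(G)$. There is a tight walk from $\mathbf x$ to $\mathbf y$ of stretch congruent to $k$ modulo $r$ if and only if $\mathbf x$ is tightly connected to $\mathrm{cyc}^k(\mathbf y)$, where $\mathrm{cyc}(x_1\cdots x_r)=x_rx_1\cdots x_{r-1}$.
   Context: An $r$-graph is an $r$-uniform hypergraph. An oriented edge is an ordered $r$-tuple $x_1\cdots x_r$ of vertices whose underlying set is an edge of $G$; $\vec E(G)$ is the set of oriented edges. $\mathbf x,\mathbf y\in\vec E(G)$ are tightly connected if there is a sequence $\mathbf x=\mathbf z^{(0)},\dots,\mathbf z^{(s)}=\mathbf y$ of oriented edges such that consecutive terms differ in at most one coordinate. A tight walk of stretch $\ell$ is a sequence $v_1\cdots v_{\ell+r}$ of (not necessarily distinct) vertices with $v_{i+1}\cdots v_{i+r}\in\vec E(G)$ for each $0\le i\le\ell$; it goes from $v_1\cdots v_r$ to $v_{\ell+1}\cdots v_{\ell+r}$. *)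

theory Defs
  imports "HOL-Number_Theory.Cong"
begin

definition r_graph :: "nat \<Rightarrow> 'a set set \<Rightarrow> bool" where
  "r_graph r E \<longleftrightarrow> (\<forall>e\<in>E. card e = r)"

definition oriented_edges :: "nat \<Rightarrow> 'a set set \<Rightarrow> 'a list set" where
  "oriented_edges r E = {xs. length xs = r \<and> set xs \<in> E}"

definition tight_step :: "nat \<Rightarrow> 'a set set \<Rightarrow> 'a list \<Rightarrow> 'a list \<Rightarrow> bool" where
  "tight_step r E x y \<longleftrightarrow> x \<in> oriented_edges r E \<and> y \<in> oriented_edges r E \<and>
     card {i. i < r \<and> x ! i \<noteq> y ! i} \<le> 1"

definition tightly_connected :: "nat \<Rightarrow> 'a set set \<Rightarrow> 'a list \<Rightarrow> 'a list \<Rightarrow> bool" where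
  "tightly_connected r E x y \<longleftrightarrow> x \<in> oriented_edges r E \<and> y \<in> oriented_edges r E \<and>
     (tight_step r E)\<^sup>*\<^sup>* x y"

definition tight_walk :: "nat \<Rightarrow> 'a set set \<Rightarrow> nat \<Rightarrow> 'a list \<Rightarrow> bool" where
  "tight_walk r E l vs \<longleftrightarrow> length vs = l + r \<and>
     (\<forall>i\<le>l. take r (drop i vs) \<in> oriented_edges r E)"

definition walk_start :: "nat \<Rightarrow> 'a list \<Rightarrow> 'a list" where
  "walk_start r vs = take r vs"

definition walk_end :: "nat \<Rightarrow> nat \<Rightarrow> 'a list \<Rightarrow> 'a list" where
  "walk_end r l vs = take r (drop l vs)"

definition cyc :: "'a list \<Rightarrow> 'a list" where
  "cyc xs = (if xs = [] then [] else last xs # butlast xs)"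

end

theory Submission
  imports Defs
begin

lemma cyc_length[simp]: "length (cyc a) = length a"
  by (auto simp: cyc_def)

lemma cyc_set[simp]: "set (cyc a) = set a"
proof (cases "a = []")
  case False
  then have "set a = set (butlast a @ [last a])" by simp
  then show ?thesis by (auto simp: cyc_def)
qed (simp add: cyc_def)

lemma rotate1_cyc[simp]: "rotate1 (cyc a) = a"
  by (cases "a = []") (auto simp: cyc_def)

lemma funpow_cyc_length[simp]: "length ((cyc ^^ n) a) = length a"
  by (induction n) auto

lemma funpow_cyc_set[simp]: "set ((cyc ^^ n) a) = set a"
  by (induction n) auto

lemma rotate_funpow_cyc: "rotate n ((cyc ^^ n) a) = a"
proof (induction n)
  case (Suc n)
  have "rotate (Suc n) ((cyc ^^ Suc n) a) = rotate1 (rotate n (cyc ((cyc ^^ n) a)))"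
    by simp
  also have "\<dots> = rotate n (rotate1 (cyc ((cyc ^^ n) a)))"
    by (rule rotate1_rotate_swap)
  also have "\<dots> = a" using Suc by simp
  finally show ?case .
qed simp

lemma funpow_cyc_len: "(cyc ^^ length a) a = a"
proof -
  have "rotate (length a) ((cyc ^^ length a) a) = (cyc ^^ length a) a"
    by (rule rotate_id) simp
  then show ?thesis using rotate_funpow_cyc by metis
qed

lemma funpow_cyc_mult: "(cyc ^^ (length a * q)) a = a"
proof (induction q)
  case (Suc q)
  have "(cyc ^^ (length a * Suc q)) a = (cyc ^^ (length a * q)) ((cyc ^^ length a) a)"
    by (metis funpow_add mult_Suc_right add.commute comp_apply)
  also have "\<dots> = a" using Suc funpow_cyc_len by metis
  finally show ?case .
qed simp

lemma funpow_cyc_mod: "(cyc ^^ n) a = (cyc ^^ (n mod length a)) a"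
proof -
  have "n = n mod length a + length a * (n div length a)" by simp
  then have "(cyc ^^ n) a = (cyc ^^ (n mod length a)) ((cyc ^^ (length a * (n div length a))) a)"
    by (metis funpow_add o_apply)
  then show ?thesis using funpow_cyc_mult by metis
qed

lemma cyc_nth: "length a = r \<Longrightarrow> j < r \<Longrightarrow> cyc a ! j = a ! (if j = 0 then r - 1 else j - 1)"
  by (cases j) (auto simp: cyc_def last_conv_nth nth_butlast)

lemma step_char:
  assumes "length a = r" "length b = r"
  shows "card {i. i<r \<and> a!i \<noteq> b!i} \<le> 1 \<longleftrightarrow> (\<exists>p c. b = a[p:=c])"
proof
  assume h: "card {i. i<r \<and> a!i \<noteq> b!i} \<le> 1"
  show "\<exists>p c. b = a[p:=c]"
  proof (cases "{i. i<r \<and> a!i \<noteq> b!i} = {}")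
    case True
    then have "\<forall>i<r. a!i = b!i" by blast
    then have "b = a" using assms by (simp add: nth_equalityI)
    then show ?thesis by (metis list_update_id)
  next
    case False
    then obtain p where p: "p \<in> {i. i<r \<and> a!i \<noteq> b!i}" by blast
    have fin: "finite {i. i<r \<and> a!i \<noteq> b!i}" by simp
    have "\<forall>i\<in>{i. i<r \<and> a!i \<noteq> b!i}. \<forall>j\<in>{i. i<r \<and> a!i \<noteq> b!i}. i = j"
      using h card_le_Suc0_iff_eq[OF fin] by simp
    then have all: "\<forall>i<r. i \<noteq> p \<longrightarrow> a!i = b!i" using p by blast
    have "b = a[p := b!p]"
    proof (rule nth_equalityI)
      show "length b = length (a[p := b!p])" using assms by simp
      fix i assume "i < length b"
      then show "b ! i = a[p := b ! p] ! i" using all assms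
        by (cases "i = p") (simp_all add: nth_list_update)
    qed
    then show ?thesis by blast
  qed
next
  assume "\<exists>p c. b = a[p:=c]"
  then obtain p c where b: "b = a[p:=c]" by blast
  have "{i. i<r \<and> a!i \<noteq> b!i} \<subseteq> {p}"
  proof
    fix i assume "i \<in> {i. i<r \<and> a!i \<noteq> b!i}"
    then have ne: "a!i \<noteq> b!i" by simp
    show "i \<in> {p}"
    proof (rule ccontr)
      assume "i \<notin> {p}"
      then have "i \<noteq> p" by simp
      then have "b!i = a!i" using b by simp
      then show False using ne by simp
    qed
  qed
  then show "card {i. i<r \<and> a!i \<noteq> b!i} \<le> 1"
    using card_mono[of "{p}"] by simp
qed

lemma cyc_upd:
  assumes "length a = r" "r \<ge> 1" "p < r"
  shows "cyc (a[p:=c]) = (cyc a)[(if p = r-1 then 0 else p+1) := c]"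
proof (rule nth_equalityI)
  show "length (cyc (a[p:=c])) = length ((cyc a)[(if p = r-1 then 0 else p+1) := c])" by simp
  fix j assume "j < length (cyc (a[p:=c]))"
  then have j: "j < r" using assms by simp
  have l2: "length (a[p:=c]) = r" using assms by simp
  define s where "s = (if j = 0 then r - 1 else j - 1)"
  have s: "s < r" using j assms unfolding s_def by auto
  have iff: "(s = p) = (j = (if p = r-1 then 0 else p+1))" using j assms by (auto simp: s_def)
  have ca: "cyc a ! j = a ! s" using cyc_nth[OF assms(1) j] unfolding s_def .
  have "cyc (a[p:=c]) ! j = a[p:=c] ! s" using cyc_nth[OF l2 j] unfolding s_def .
  also have "\<dots> = (if s = p then c else a ! s)" using s assms by (simp add: nth_list_update)
  also have "\<dots> = (cyc a)[(if p = r-1 then 0 else p+1) := c] ! j"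
    using iff ca j assms(1) by (simp add: nth_list_update)
  finally show "cyc (a[p:=c]) ! j = (cyc a)[(if p = r-1 then 0 else p+1) := c] ! j" .
qed

lemma tight_step_cyc:
  assumes "r \<ge> 1" "tight_step r E a b"
  shows "tight_step r E (cyc a) (cyc b)"
proof -
  have a: "a \<in> oriented_edges r E" and b: "b \<in> oriented_edges r E"
    and c: "card {i. i < r \<and> a ! i \<noteq> b ! i} \<le> 1"
    using assms(2) by (auto simp: tight_step_def)
  have la: "length a = r" and lb: "length b = r" using a b by (auto simp: oriented_edges_def)
  obtain p c where bc: "b = a[p:=c]" using step_char[OF la lb] c by blast
  have "\<exists>q d. cyc b = (cyc a)[q:=d]"
  proof (cases "p < r")
    case True then show ?thesis using cyc_upd[OF la assms(1) True] bc by blast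
  next
    case False then have "b = a" using bc la by (simp add: list_update_beyond)
    then show ?thesis by (metis list_update_id)
  qed
  then have "card {i. i < r \<and> cyc a ! i \<noteq> cyc b ! i} \<le> 1"
    using step_char[of "cyc a" r "cyc b"] la lb by simp
  moreover have "cyc a \<in> oriented_edges r E" "cyc b \<in> oriented_edges r E"
    using a b by (auto simp: oriented_edges_def)
  ultimately show ?thesis by (simp add: tight_step_def)
qed

lemma rtranclp_cyc:
  assumes "r \<ge> 1" "(tight_step r E)\<^sup>*\<^sup>* a b"
  shows "(tight_step r E)\<^sup>*\<^sup>* ((cyc ^^ n) a) ((cyc ^^ n) b)"
proof (induction n)
  case 0 then show ?case using assms by simp
next
  case (Suc n)
  have "(tight_step r E)\<^sup>*\<^sup>* (cyc ((cyc ^^ n) a)) (cyc ((cyc ^^ n) b))"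
    using Suc
  proof (induction rule: rtranclp_induct)
    case (step y z)
    then show ?case using tight_step_cyc[OF assms(1)] by (meson rtranclp.simps)
  qed simp
  then show ?case by simp
qed

lemma rotate_mod_eq: "m mod length xs = n mod length xs \<Longrightarrow> rotate m xs = rotate n xs"
  by (metis rotate_conv_mod)

lemma walk_extend1:
  assumes "r \<ge> 1" "tight_walk r E l vs" "tl (drop l vs) @ [b] \<in> oriented_edges r E"
  shows "tight_walk r E (l+1) (vs@[b]) \<and> walk_start r (vs@[b]) = walk_start r vs
     \<and> walk_end r (l+1) (vs@[b]) = tl (drop l vs) @ [b]"
proof -
  have len: "length vs = l + r" using assms(2) by (simp add: tight_walk_def)
  have "\<forall>i\<le>l+1. take r (drop i (vs@[b])) \<in> oriented_edges r E"
  proof (intro allI impI)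
    fix i assume i: "i \<le> l+1"
    show "take r (drop i (vs@[b])) \<in> oriented_edges r E"
    proof (cases "i \<le> l")
      case True
      then have "take r (drop i (vs@[b])) = take r (drop i vs)" using len by simp
      then show ?thesis using assms(2) True by (simp add: tight_walk_def)
    next
      case False
      then have "i = l+1" using i by simp
      moreover have "drop (l+1) vs = tl (drop l vs)" by (simp add: drop_Suc tl_drop)
      moreover have "length (tl (drop l vs) @ [b]) = r" using len assms(1) by simp
      ultimately show ?thesis using assms(3) len by simp
    qed
  qed
  moreover have "drop (l+1) vs = tl (drop l vs)" by (simp add: drop_Suc tl_drop)
  ultimately show ?thesis using len assms(1)
    by (simp add: tight_walk_def walk_start_def walk_end_def)
qed

lemma walk_extend_rot:
  assumes "r \<ge> 1" "tight_walk r E l vs" "walk_start r vs = x"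
  shows "\<exists>vs'. tight_walk r E (l+m) vs' \<and> walk_start r vs' = x \<and>
           walk_end r (l+m) vs' = rotate m (walk_end r l vs)"
proof (induction m)
  case 0 then show ?case using assms by auto
next
  case (Suc m)
  then obtain vs' where w: "tight_walk r E (l+m) vs'" "walk_start r vs' = x"
    "walk_end r (l+m) vs' = rotate m (walk_end r l vs)" by blast
  have len: "length vs' = l + m + r" using w(1) by (simp add: tight_walk_def)
  have de: "drop (l+m) vs' = rotate m (walk_end r l vs)" using w(3) len
    by (simp add: walk_end_def)
  have ue: "walk_end r l vs \<in> oriented_edges r E" using assms(2)
    unfolding tight_walk_def walk_end_def by blast
  define u where "u = rotate m (walk_end r l vs)"
  have lu: "length u = r" using ue by (simp add: u_def oriented_edges_def)
  then have "u \<noteq> []" using assms(1) by auto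
  then have ru: "tl u @ [hd u] = rotate1 u" by (cases u) auto
  have "rotate1 u \<in> oriented_edges r E" using ue by (simp add: u_def oriented_edges_def)
  then have "tight_walk r E (l+m+1) (vs'@[hd u]) \<and> walk_start r (vs'@[hd u]) = walk_start r vs'
     \<and> walk_end r (l+m+1) (vs'@[hd u]) = tl (drop (l+m) vs') @ [hd u]"
    using walk_extend1[OF assms(1) w(1), of "hd u"] de ru u_def by simp
  then show ?case using w(2) de ru u_def by (intro exI[of _ "vs'@[hd u]"]) simp
qed

theorem proposition3p9:
  fixes r :: nat and E :: "'a set set" and k :: nat and x y :: "'a list"
  assumes "r \<ge> 1"
    and "r_graph r E"
    and "x \<in> oriented_edges r E" and "y \<in> oriented_edges r E"
  shows "(\<exists>l vs. [l = k] (mod r) \<and> tight_walk r E l vs \<and>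
                 walk_start r vs = x \<and> walk_end r l vs = y)
         \<longleftrightarrow> tightly_connected r E x ((cyc ^^ k) y)"
proof
  assume "\<exists>l vs. [l = k] (mod r) \<and> tight_walk r E l vs \<and>
                 walk_start r vs = x \<and> walk_end r l vs = y"
  then obtain l vs where lk: "[l = k] (mod r)" and w: "tight_walk r E l vs"
    and s: "walk_start r vs = x" and e: "walk_end r l vs = y" by blast
  have len: "length vs = l + r" using w by (simp add: tight_walk_def)
  have AL: "\<forall>i\<le>l. (tight_step r E)\<^sup>*\<^sup>* x ((cyc ^^ i) (take r (drop i vs)))"
  proof (intro allI)
    fix i show "i \<le> l \<longrightarrow> (tight_step r E)\<^sup>*\<^sup>* x ((cyc ^^ i) (take r (drop i vs)))"
    proof (induction i)
      case 0 then show ?case using s by (simp add: walk_start_def)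
    next
      case (Suc i)
      show ?case
      proof
        assume i: "Suc i \<le> l"
        let ?z = "take r (drop i vs)" and ?z' = "take r (drop (Suc i) vs)"
        have z: "?z \<in> oriented_edges r E" using w i by (simp add: tight_walk_def)
        have z': "?z' \<in> oriented_edges r E" using w i by (simp add: tight_walk_def)
        have eq: "cyc ?z' = ?z[0 := vs ! (i+r)]"
          using i len assms(1)
          by (intro nth_equalityI) (auto simp: cyc_nth nth_list_update)
        have "card {j. j < r \<and> ?z ! j \<noteq> cyc ?z' ! j} \<le> 1"
          using step_char[of ?z r "cyc ?z'"] eq i len by auto
        then have "tight_step r E ?z (cyc ?z')"
          using z z' by (simp add: tight_step_def oriented_edges_def)
        then have "(tight_step r E)\<^sup>*\<^sup>* ((cyc ^^ i) ?z) ((cyc ^^ i) (cyc ?z'))"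
          using rtranclp_cyc[OF assms(1)] by blast
        moreover have "(cyc ^^ i) (cyc ?z') = (cyc ^^ Suc i) ?z'"
          by (simp add: funpow_Suc_right del: funpow.simps)
        ultimately show "(tight_step r E)\<^sup>*\<^sup>* x ((cyc ^^ Suc i) ?z')"
          using Suc i by (metis Suc_leD rtranclp_trans)
      qed
    qed
  qed
  have R: "(tight_step r E)\<^sup>*\<^sup>* x ((cyc ^^ l) y)" using AL[rule_format, of l] e by (simp add: walk_end_def)
  have "length y = r" using assms(4) by (simp add: oriented_edges_def)
  moreover have "l mod r = k mod r" using lk by (simp add: cong_def)
  ultimately have "(cyc ^^ l) y = (cyc ^^ k) y" 
    using funpow_cyc_mod[of l y] funpow_cyc_mod[of k y] by simp
  with R show "tightly_connected r E x ((cyc ^^ k) y)" using assms(3,4)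
    by (simp add: tightly_connected_def oriented_edges_def)
next
  assume tc: "tightly_connected r E x ((cyc ^^ k) y)"
  have main: "\<exists>l vs. tight_walk r E l vs \<and> walk_start r vs = x \<and> walk_end r l vs = rotate l w"
    if "(tight_step r E)\<^sup>*\<^sup>* x w" for w
    using that
  proof (induction rule: rtranclp_induct)
    case base
    have "length x = r" using assms(3) by (simp add: oriented_edges_def)
    then have "tight_walk r E 0 x \<and> walk_start r x = x \<and> walk_end r 0 x = rotate 0 x"
      using assms(3) by (simp add: tight_walk_def walk_start_def walk_end_def)
    then show ?case by blast
  next
    case (step w w')
    then obtain l vs where w: "tight_walk r E l vs" "walk_start r vs = x"
      "walk_end r l vs = rotate l w" by blast
    have ow: "w \<in> oriented_edges r E" and ow': "w' \<in> oriented_edges r E"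
      and c: "card {i. i < r \<and> w ! i \<noteq> w' ! i} \<le> 1"
      using step(2) by (auto simp: tight_step_def)
    have lw: "length w = r" and lw': "length w' = r" using ow ow' by (auto simp: oriented_edges_def)
    obtain p c where pc: "w' = w[p:=c]" using step_char[OF lw lw'] c by blast
    show ?case
    proof (cases "p < r")
      case False
      then have "w' = w" using pc lw by (simp add: list_update_beyond)
      then show ?thesis using w by blast
    next
      case True
      define m where "m = r*l + p - l"
      have rl: "r * l \<ge> l" using assms(1) by simp
      have lm: "l + m = r*l + p" unfolding m_def using rl by linarith
      obtain vs' where v: "tight_walk r E (l+m) vs'" "walk_start r vs' = x"
        "walk_end r (l+m) vs' = rotate m (walk_end r l vs)"
        using walk_extend_rot[OF assms(1) w(1,2)] by blast
      have len: "length vs' = l + m + r" using v(1) by (simp add: tight_walk_def)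
      have "rotate m (walk_end r l vs) = rotate (r*l+p) w"
        using w(3) lm by (simp add: rotate_rotate add.commute)
      also have "\<dots> = rotate p w" using lw True
        by (intro rotate_mod_eq) simp
      also have "\<dots> = drop p w @ take p w" using lw True by (simp add: rotate_drop_take)
      finally have de: "drop (l+m) vs' = drop p w @ take p w" using v(3) len
        by (simp add: walk_end_def)
      have rw': "rotate (Suc p) w' = drop (Suc p) w @ take p w @ [c]"
      proof -
        have "rotate p w' = drop p w' @ take p w'" using lw' True by (simp add: rotate_drop_take)
        also have "\<dots> = (c # drop (Suc p) w) @ take p w"
          using pc True lw by (simp add: upd_conv_take_nth_drop)
        finally show ?thesis by (simp add: rotate1_rotate_swap[symmetric])
      qed
      have tl: "tl (drop (l+m) vs') @ [c] = rotate (Suc p) w'"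
        using de rw' True lw by (simp add: Cons_nth_drop_Suc[symmetric])
      have "rotate (Suc p) w' \<in> oriented_edges r E" using ow' by (simp add: oriented_edges_def)
      then have ext: "tight_walk r E (l+m+1) (vs'@[c]) \<and> walk_start r (vs'@[c]) = x
          \<and> walk_end r (l+m+1) (vs'@[c]) = rotate (Suc p) w'"
        using walk_extend1[OF assms(1) v(1), of c] tl v(2) by simp
      have "rotate (l+m+1) w' = rotate (Suc p) w'"
      proof -
        have "(l+m+1) mod r = (Suc p) mod r" using lm by simp
        then show ?thesis using lw' by (intro rotate_mod_eq) simp
      qed
      then show ?thesis using ext by metis
    qed
  qed
  obtain l vs where w: "tight_walk r E l vs" "walk_start r vs = x"
    "walk_end r l vs = rotate l ((cyc ^^ k) y)"
    using main[of "(cyc ^^ k) y"] tc unfolding tightly_connected_def by blast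
  define m where "m = r*l + k - l"
  have rl: "r * l \<ge> l" using assms(1) by simp
  have lm: "l + m = r*l + k" unfolding m_def using rl by linarith
  obtain vs' where v: "tight_walk r E (l+m) vs'" "walk_start r vs' = x"
    "walk_end r (l+m) vs' = rotate m (walk_end r l vs)"
    using walk_extend_rot[OF assms(1) w(1,2)] by blast
  have ly: "length y = r" using assms(4) by (simp add: oriented_edges_def)
  have "rotate m (walk_end r l vs) = rotate (r*l+k) ((cyc ^^ k) y)"
    using w(3) lm by (simp add: rotate_rotate add.commute)
  also have "\<dots> = rotate k ((cyc ^^ k) y)"
  proof -
    have "(r*l+k) mod r = k mod r" by simp
    then show ?thesis using ly by (intro rotate_mod_eq) simp
  qed
  also have "\<dots> = y" by (rule rotate_funpow_cyc)
  finally have "walk_end r (l+m) vs' = y" using v(3) by simp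
  moreover have "[l + m = k] (mod r)" using lm by (simp add: cong_def)
  ultimately show "\<exists>l vs. [l = k] (mod r) \<and> tight_walk r E l vs \<and>
                 walk_start r vs = x \<and> walk_end r l vs = y" using v by blast
qed

end
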